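(* Let $\mathbf X\in\mathbb R^{m\times n}$, let $\mathbf Y\in\mathbb R^{q\times n}$ satisfy $\mathbf Y^T\mathbf Y=\mathbf I_n$, and let $\lambda>0$. If $\widehat{\mathbf B}$ is the optimal solution of $\min_{\mathbf B\in\mathbb R^{m\times q}}\{\frac12\|\mathbf X-\mathbf B\mathbf Y\|_F^2+\lambda\|\mathbf B\|_*\}$ and $\widehat{\mathbf S}$ is the optimal solution of $\min_{\mathbf S\in\mathbb R^{m\times n}}\{\frac12\|\mathbf X-\mathbf S\|_F^2+\lambda\|\mathbf S\|_*\}$, then $\widehat{\mathbf S}=\widehat{\mathbf B}\mathbf Y$.
   Context: $\|\cdot\|_*$ is the nuclear norm (sum of singular values), $\|\cdot\|_F$ the Frobenius norm. *)

theory Defs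
  imports Complex_Main "Jordan_Normal_Form.Char_Poly"
begin

definition frob_norm :: "real mat \<Rightarrow> real" where
  "frob_norm A = sqrt (\<Sum>i<dim_row A. \<Sum>j<dim_col A. (A $$ (i,j))^2)"

text \<open>Singular values of A (with multiplicity) are the square roots of the eigenvalues
  of A^T A, i.e. of the roots (with multiplicity) of its characteristic polynomial.
  The nuclear norm is their sum.\<close>
definition nuclear_norm :: "real mat \<Rightarrow> real" where
  "nuclear_norm A =
     (let p = char_poly (transpose_mat A * A)
      in \<Sum>x\<in>{x. poly p x = 0}. of_nat (order x p) * sqrt x)"

end

theory Submission
  imports Defs
begin


definition diagm :: "nat \<Rightarrow> (nat \<Rightarrow> real) \<Rightarrow> real mat" where
  "diagm n d = mat n n (\<lambda>(i,j). if i = j then d i else 0)"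

lemma diagm_dims[simp]: "dim_row (diagm n d) = n" "dim_col (diagm n d) = n"
  unfolding diagm_def by auto

lemma diagm_index[simp]: "i < n \<Longrightarrow> j < n \<Longrightarrow> diagm n d $$ (i,j) = (if i = j then d i else 0)"
  unfolding diagm_def by auto

lemma diagm_carrier[simp]: "diagm n d \<in> carrier_mat n n"
  unfolding diagm_def by auto

lemma prod_list_map_upt_aux: "prod_list (map f [0..<n]) = (\<Prod>i\<in>{0..<n}. f i)"
  by (induct n) auto

lemma char_poly_diagm: "char_poly (diagm n d) = (\<Prod>i\<in>{0..<n}. [:- d i, 1:])"
proof -
  have "upper_triangular (diagm n d)" unfolding diagm_def by auto
  hence "char_poly (diagm n d) = (\<Prod>a\<leftarrow>diag_mat (diagm n d). [:- a, 1:])"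
    by (rule char_poly_upper_triangular[OF diagm_carrier])
  also have "diag_mat (diagm n d) = map d [0..<n]"
    unfolding diag_mat_def diagm_def by auto
  finally show ?thesis by (simp add: prod_list_map_upt_aux[of "(\<lambda>a. [:- a, 1:]) \<circ> d"])
qed

lemma order_prod_lin: fixes d :: "nat \<Rightarrow> real" shows "order x (\<Prod>i\<in>{0..<n::nat}. [:- d i, 1:]) = card {i\<in>{0..<n}. d i = x}"
proof (induct n)
  case 0
  then show ?case by (simp add: order_0I)
next
  case (Suc n)
  have h: "(\<Prod>i\<in>{0..<n}. [:- d i, 1:]) \<noteq> 0"
    by (subst prod_zero_iff) auto
  have ne: "(\<Prod>i\<in>{0..<n}. [:- d i, 1:]) * [:- d n, 1:] \<noteq> 0"
    using h by (metis mult_eq_0_iff pCons_eq_0_iff one_neq_zero)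
  have p: "(\<Prod>i\<in>{0..<Suc n}. [:- d i, 1:]) = (\<Prod>i\<in>{0..<n}. [:- d i, 1:]) * [:- d n, 1:]"
    by simp
  have "{i\<in>{0..<Suc n}. d i = x} = {i\<in>{0..<n}. d i = x} \<union> (if d n = x then {n} else {})"
    by (auto simp: less_Suc_eq)
  hence c: "card {i\<in>{0..<Suc n}. d i = x} = card {i\<in>{0..<n}. d i = x} + (if d n = x then 1 else 0)"
    by (auto simp: card_insert_if)
  show ?case unfolding p order_mult[OF ne] Suc c
    by (simp add: order_linear')
qed

lemma roots_prod_lin: fixes d :: "nat \<Rightarrow> real" shows "{x. poly (\<Prod>i\<in>{0..<n::nat}. [:- d i, 1:]) x = 0} = d ` {0..<n}"
proof -
  have "poly (\<Prod>i\<in>{0..<n}. [:- d i, 1:]) x = 0 \<longleftrightarrow> x \<in> d ` {0..<n}" for x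
    unfolding poly_prod by (subst prod_zero_iff, auto)
  thus ?thesis by auto
qed

lemma nuclear_sum_prod_lin: fixes d :: "nat \<Rightarrow> real" shows
  "(\<Sum>x\<in>{x. poly (\<Prod>i\<in>{0..<n::nat}. [:- d i, 1:]) x = 0}.
      of_nat (order x (\<Prod>i\<in>{0..<n}. [:- d i, 1:])) * sqrt x) = (\<Sum>i\<in>{0..<n}. sqrt (d i))"
proof -
  have "(\<Sum>i\<in>{0..<n}. sqrt (d i)) = (\<Sum>y\<in>d ` {0..<n}. \<Sum>i\<in>{i\<in>{0..<n}. d i = y}. sqrt (d i))"
    by (rule sum.image_gen) auto
  also have "\<dots> = (\<Sum>y\<in>d ` {0..<n}. of_nat (card {i\<in>{0..<n}. d i = y}) * sqrt y)"
    by (rule sum.cong) auto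
  finally show ?thesis unfolding roots_prod_lin order_prod_lin by simp
qed

lemma nuclear_norm_diag:
  assumes A: "A \<in> carrier_mat m n" and U: "U \<in> carrier_mat n n"
    and UU: "transpose_mat U * U = 1\<^sub>m n"
    and D: "transpose_mat U * (transpose_mat A * A) * U = diagm n d"
  shows "nuclear_norm A = (\<Sum>i\<in>{0..<n}. sqrt (d i))"
proof -
  let ?M = "transpose_mat A * A"
  have M: "?M \<in> carrier_mat n n" using A by auto
  have UT: "transpose_mat U \<in> carrier_mat n n" using U by auto
  have UU': "U * transpose_mat U = 1\<^sub>m n"
    using mat_mult_left_right_inverse[OF UT U UU] .
  have "U * diagm n d * transpose_mat U = U * (transpose_mat U * ?M * U) * transpose_mat U"
    using D by simp
  also have "\<dots> = (U * transpose_mat U) * ?M * (U * transpose_mat U)"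
    using U UT M by (simp add: assoc_mult_mat[of _ n n _ n _ n])
  also have "\<dots> = ?M" using UU' M by (simp add: left_mult_one_mat right_mult_one_mat)
  finally have eq: "?M = U * diagm n d * transpose_mat U" by simp
  have "similar_mat ?M (diagm n d)"
    unfolding similar_mat_def similar_mat_wit_def Let_def
    by (rule exI[of _ U], rule exI[of _ "transpose_mat U"], insert M U UT UU UU' eq, auto)
  hence cp: "char_poly ?M = char_poly (diagm n d)" by (rule char_poly_similar)
  show ?thesis unfolding nuclear_norm_def Let_def cp char_poly_diagm by (rule nuclear_sum_prod_lin)
qed



lemma sum_sq_pos_vec:
  fixes v :: "real vec"
  assumes v: "v \<in> carrier_vec n" and nz: "v \<noteq> 0\<^sub>v n"
  shows "v \<bullet> v > 0"
proof -
  from nz v obtain i where i: "i < n" and vi: "v $ i \<noteq> 0"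
    by (metis eq_vecI carrier_vecD index_zero_vec)
  have "v \<bullet> v = (\<Sum>j\<in>{0..<n}. v $ j * v $ j)" using v unfolding scalar_prod_def by auto
  also have "\<dots> > 0"
  proof (rule sum_pos2[of _ i])
    show "(\<And>j. j \<in> {0..<n} \<Longrightarrow> 0 \<le> v $ j * v $ j)" by simp
    show "0 < v $ i * v $ i" using vi by (auto simp: zero_less_mult_iff linorder_neq_iff)
  qed (use i in auto)
  finally show ?thesis .
qed

lemma real_eigen:
  fixes M :: "real mat"
  assumes M: "M \<in> carrier_mat n n" and sym: "transpose_mat M = M" and n: "n > 0"
  shows "\<exists>e v. v \<in> carrier_vec n \<and> v \<bullet> v = 1 \<and> M *\<^sub>v v = e \<cdot>\<^sub>v v"
proof -
  let ?Mc = "of_real_hom.mat_hom M :: complex mat"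
  have Mc: "?Mc \<in> carrier_mat n n" using M by auto
  have cp: "char_poly ?Mc = map_poly of_real (char_poly M)"
    by (rule of_real_hom.char_poly_hom[OF M])
  have "degree (char_poly ?Mc) = n" using degree_monic_char_poly[OF Mc] by simp
  hence "\<not> constant (poly (char_poly ?Mc))" using n by (simp add: constant_degree)
  then obtain a where a: "poly (char_poly ?Mc) a = 0"
    using fundamental_theorem_of_algebra by blast
  hence "eigenvalue ?Mc a" using eigenvalue_root_char_poly[OF Mc] by simp
  then obtain w where w: "w \<in> carrier_vec n" "w \<noteq> 0\<^sub>v n" "?Mc *\<^sub>v w = a \<cdot>\<^sub>v w"
    unfolding eigenvalue_def eigenvector_def using Mc by auto
  have Msym: "M $$ (i,j) = M $$ (j,i)" if "i < n" "j < n" for i j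
    using sym that M by (metis carrier_matD index_transpose_mat(1))
  have ev: "(\<Sum>j\<in>{0..<n}. of_real (M $$ (i,j)) * w $ j) = a * w $ i" if i: "i < n" for i
  proof -
    have "(?Mc *\<^sub>v w) $ i = (a \<cdot>\<^sub>v w) $ i" using w by simp
    moreover have "(?Mc *\<^sub>v w) $ i = (\<Sum>j\<in>{0..<n}. of_real (M $$ (i,j)) * w $ j)"
      unfolding mult_mat_vec_def scalar_prod_def using i M w by simp
    ultimately show ?thesis using i w by simp
  qed
  define s where "s = (\<Sum>i\<in>{0..<n}. cnj (w $ i) * (\<Sum>j\<in>{0..<n}. of_real (M $$ (i,j)) * w $ j))"
  define r where "r = (\<Sum>i\<in>{0..<n}. (cmod (w $ i))^2)"
  have s1: "s = a * of_real r"
  proof -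
    have "s = (\<Sum>i\<in>{0..<n}. a * (cnj (w $ i) * w $ i))"
      unfolding s_def by (rule sum.cong, auto simp: ev)
    also have "\<dots> = a * of_real r" unfolding r_def of_real_sum sum_distrib_left
    proof (rule sum.cong)
      fix x
      have "cnj (w $ x) * w $ x = complex_of_real ((cmod (w $ x))\<^sup>2)"
        by (subst mult.commute, rule complex_norm_square[symmetric])
      thus "a * (cnj (w $ x) * w $ x) = a * complex_of_real ((cmod (w $ x))\<^sup>2)" by simp
    qed simp
    finally show ?thesis .
  qed
  have s2: "cnj s = s"
  proof -
    have "cnj s = (\<Sum>i\<in>{0..<n}. \<Sum>j\<in>{0..<n}. w $ i * of_real (M $$ (i,j)) * cnj (w $ j))"
      unfolding s_def by (simp add: sum_distrib_left mult.assoc)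
    also have "\<dots> = (\<Sum>j\<in>{0..<n}. \<Sum>i\<in>{0..<n}. w $ i * of_real (M $$ (i,j)) * cnj (w $ j))"
      by (rule sum.swap)
    also have "\<dots> = s"
      unfolding s_def sum_distrib_left
      by (rule sum.cong, simp, rule sum.cong, simp, auto simp: Msym mult.commute mult.left_commute)
    finally show ?thesis .
  qed
  have rpos: "r > 0"
  proof -
    from w obtain i where i: "i < n" and wi: "w $ i \<noteq> 0"
      by (metis eq_vecI carrier_vecD index_zero_vec)
    show ?thesis unfolding r_def
      by (rule sum_pos2[of _ i], insert i wi, auto)
  qed
  have "Im s = 0" using s2 by (metis cnj.simps(2) complex.expand neg_equal_zero)
  hence "Im a = 0" using s1 rpos by (simp)
  then obtain e where ae: "a = of_real e" by (metis complex_is_Real_iff Reals_cases)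
  have "of_real (poly (char_poly M) e) = (0::complex)"
    using a unfolding cp ae of_real_hom.poly_map_poly .
  hence "poly (char_poly M) e = 0" by simp
  hence "eigenvalue M e" using eigenvalue_root_char_poly[OF M] by simp
  then obtain v where v: "v \<in> carrier_vec n" "v \<noteq> 0\<^sub>v n" "M *\<^sub>v v = e \<cdot>\<^sub>v v"
    unfolding eigenvalue_def eigenvector_def using M by auto
  have vp: "v \<bullet> v > 0" by (rule sum_sq_pos_vec[OF v(1,2)])
  define u where "u = (1 / sqrt (v \<bullet> v)) \<cdot>\<^sub>v v"
  have u: "u \<in> carrier_vec n" unfolding u_def using v by auto
  have "u \<bullet> u = (1 / sqrt (v \<bullet> v)) * (1 / sqrt (v \<bullet> v)) * (v \<bullet> v)"
    unfolding u_def using v by (simp add: smult_scalar_prod_distrib scalar_prod_smult_distrib[of _ n])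
  also have "\<dots> = 1" using vp by (simp add: field_simps)
  finally have uu: "u \<bullet> u = 1" .
  have "M *\<^sub>v u = e \<cdot>\<^sub>v u" unfolding u_def using v M
    by (simp add: mult_mat_vec[of _ n n] smult_smult_assoc mult.commute)
  thus ?thesis using u uu by blast
qed



lemma householder:
  fixes v :: "real vec"
  assumes v: "v \<in> carrier_vec n" and vv: "v \<bullet> v = 1" and n: "n > 0"
  shows "\<exists>H \<in> carrier_mat n n. transpose_mat H * H = 1\<^sub>m n \<and> col H 0 = v"
proof -
  define w where "w = (\<lambda>k. v $ k - (if k = 0 then 1 else 0::real))"
  define s where "s = (\<Sum>k\<in>{0..<n}. (w k)^2)"
  have vv': "(\<Sum>k\<in>{0..<n}. (v $ k)^2) = 1"
    using vv v unfolding scalar_prod_def by (simp add: power2_eq_square)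
  have "s = (\<Sum>k\<in>{0..<n}. (v $ k)^2 + (if k = 0 then 1 - 2 * v $ 0 else 0))"
    unfolding s_def w_def by (rule sum.cong, auto simp: power2_eq_square algebra_simps)
  also have "\<dots> = 2 - 2 * v $ 0"
    unfolding sum.distrib vv' using n by (simp add: sum.delta)
  finally have s: "s = - 2 * w 0" unfolding w_def by simp
  show ?thesis
  proof (cases "s = 0")
    case True
    have "w k = 0" if "k < n" for k
    proof -
      have "(\<Sum>k\<in>{0..<n}. (w k)^2) = 0" using True s_def by simp
      hence "\<forall>k\<in>{0..<n}. (w k)^2 = 0" by (subst (asm) sum_nonneg_eq_0_iff) auto
      thus ?thesis using that by auto
    qed
    hence "v = unit_vec n 0" using v n unfolding w_def
      by (intro eq_vecI) (auto simp: unit_vec_def split: if_splits)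
    thus ?thesis by (intro bexI[of _ "1\<^sub>m n"]) auto
  next
    case False
    define c where "c = 2 / s"
    have cs: "c * s = 2" unfolding c_def using False by simp
    have w0: "c * w 0 = -1" unfolding c_def using False s by (simp add: field_simps)
    define H where "H = mat n n (\<lambda>(i,j). (if i = j then 1 else 0) - c * w i * w j)"
    have H: "H \<in> carrier_mat n n" unfolding H_def by simp
    have HH: "transpose_mat H * H = 1\<^sub>m n"
    proof (rule eq_matI)
      fix i j assume i: "i < dim_row (1\<^sub>m n)" and j: "j < dim_col (1\<^sub>m n)"
      hence i: "i < n" and j: "j < n" by auto
      have "(transpose_mat H * H) $$ (i,j) = (\<Sum>k\<in>{0..<n}. H $$ (k,i) * H $$ (k,j))"
        using i j H by (simp add: scalar_prod_def col_def)
      also have "\<dots> = (\<Sum>k\<in>{0..<n}. (if k = i then (if i = j then 1 else 0) - c * w i * w j else 0)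
           - c * w i * (if k = j then w j else 0) + c * c * w i * w j * (w k)^2)"
        unfolding H_def using i j by (intro sum.cong, auto simp: power2_eq_square algebra_simps)
      also have "\<dots> = (if i = j then 1 else 0) - c * w i * w j - c * w i * w j + c * c * w i * w j * s"
        unfolding sum.distrib sum_subtractf s_def sum_distrib_left[symmetric] using i j
        by (simp add: sum.delta)
      also have "\<dots> = (if i = j then 1 else 0)"
        using cs by (simp add: algebra_simps)
      finally show "(transpose_mat H * H) $$ (i,j) = 1\<^sub>m n $$ (i,j)" using i j by simp
    qed (use H in auto)
    have "col H 0 = v"
    proof (rule eq_vecI)
      fix i assume "i < dim_vec v"
      hence i: "i < n" using v by auto
      have "col H 0 $ i = (if i = 0 then 1 else 0) - (c * w 0) * w i"
        unfolding H_def using i n by simp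
      also have "\<dots> = (if i = 0 then 1 else 0) + w i" using w0 by simp
      also have "\<dots> = v $ i" unfolding w_def by simp
      finally show "col H 0 $ i = v $ i" .
    qed (use v H in auto)
    thus ?thesis using H HH by blast
  qed
qed



lemma spectral:
  fixes M :: "real mat"
  assumes "M \<in> carrier_mat n n" and "transpose_mat M = M"
  shows "\<exists>U d. U \<in> carrier_mat n n \<and> transpose_mat U * U = 1\<^sub>m n \<and> transpose_mat U * M * U = diagm n d"
  using assms
proof (induct n arbitrary: M)
  case 0
  show ?case
    by (rule exI[of _ "1\<^sub>m 0"], rule exI[of _ "\<lambda>_. 0"], insert 0, auto intro!: eq_matI simp: diagm_def)
next
  case (Suc k M)
  let ?n = "Suc k"
  have M: "M \<in> carrier_mat ?n ?n" and Msym: "transpose_mat M = M" using Suc by auto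
  obtain e v where v: "v \<in> carrier_vec ?n" "v \<bullet> v = 1" and ev: "M *\<^sub>v v = e \<cdot>\<^sub>v v"
    using real_eigen[OF M Msym] by auto
  obtain H where H: "H \<in> carrier_mat ?n ?n" and HH: "transpose_mat H * H = 1\<^sub>m ?n" and Hv: "col H 0 = v"
    using householder[OF v] by auto
  have HT: "transpose_mat H \<in> carrier_mat ?n ?n" using H by auto
  define A' where "A' = transpose_mat H * M * H"
  have A': "A' \<in> carrier_mat ?n ?n" unfolding A'_def using H M by auto
  have "col A' 0 = (transpose_mat H * M) *\<^sub>v col H 0"
    unfolding A'_def using H M by (intro col_mult2) auto
  also have "\<dots> = transpose_mat H *\<^sub>v (M *\<^sub>v v)" unfolding Hv using H M v by auto
  also have "\<dots> = e \<cdot>\<^sub>v (transpose_mat H *\<^sub>v col H 0)" unfolding ev Hv using HT v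
    by (simp add: mult_mat_vec)
  also have "transpose_mat H *\<^sub>v col H 0 = col (transpose_mat H * H) 0"
    using H HT by (intro col_mult2[symmetric]) auto
  also have "\<dots> = unit_vec ?n 0" unfolding HH by (simp add: col_one)
  finally have col0: "col A' 0 = e \<cdot>\<^sub>v unit_vec ?n 0" .
  have A'sym: "transpose_mat A' = A'"
  proof -
    have "transpose_mat A' = transpose_mat H * transpose_mat (transpose_mat H * M)"
      unfolding A'_def using H M by (intro transpose_mult) auto
    also have "transpose_mat (transpose_mat H * M) = transpose_mat M * H"
      using H M by (subst transpose_mult[of _ ?n ?n _ ?n]) auto
    finally show ?thesis unfolding A'_def Msym using H M by (simp add: assoc_mult_mat[of _ ?n ?n _ ?n _ ?n])
  qed
  have A'i0: "A' $$ (i,0) = (if i = 0 then e else 0)" if "i < ?n" for i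
  proof -
    have "A' $$ (i,0) = col A' 0 $ i" using that A' by auto
    thus ?thesis unfolding col0 using that by (auto simp: unit_vec_def)
  qed
  have A'0j: "A' $$ (0,j) = (if j = 0 then e else 0)" if "j < ?n" for j
  proof -
    have "A' $$ (0,j) = transpose_mat A' $$ (j,0)" using that A' by auto
    thus ?thesis unfolding A'sym using A'i0[OF that] by simp
  qed
  define M' where "M' = mat k k (\<lambda>(i,j). A' $$ (Suc i, Suc j))"
  have M': "M' \<in> carrier_mat k k" unfolding M'_def by auto
  have M'sym: "transpose_mat M' = M'"
  proof (rule eq_matI)
    fix i j assume "i < dim_row M'" "j < dim_col M'"
    hence ij: "i < k" "j < k" using M' by auto
    have "A' $$ (Suc j, Suc i) = transpose_mat A' $$ (Suc i, Suc j)" using ij A' by auto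
    thus "transpose_mat M' $$ (i,j) = M' $$ (i,j)" unfolding A'sym M'_def using ij by auto
  qed (use M' in auto)
  obtain U' d' where U': "U' \<in> carrier_mat k k" and UU': "transpose_mat U' * U' = 1\<^sub>m k"
    and D': "transpose_mat U' * M' * U' = diagm k d'"
    using Suc(1)[OF M' M'sym] by auto
  define E where "E = mat 1 1 (\<lambda>_. e)"
  have E: "E \<in> carrier_mat 1 1" unfolding E_def by auto
  have A'blk: "A' = four_block_mat E (0\<^sub>m 1 k) (0\<^sub>m k 1) M'"
  proof (rule eq_matI)
    fix i j assume "i < dim_row (four_block_mat E (0\<^sub>m 1 k) (0\<^sub>m k 1) M')"
      "j < dim_col (four_block_mat E (0\<^sub>m 1 k) (0\<^sub>m k 1) M')"
    hence ij: "i < ?n" "j < ?n" using E M' by auto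
    show "A' $$ (i,j) = four_block_mat E (0\<^sub>m 1 k) (0\<^sub>m k 1) M' $$ (i,j)"
    proof (cases "i = 0 \<or> j = 0")
      case True
      thus ?thesis using A'i0[OF ij(1)] A'0j[OF ij(2)] ij E M' unfolding E_def by auto
    next
      case False
      then obtain i' j' where "i = Suc i'" "j = Suc j'" by (metis not0_implies_Suc)
      thus ?thesis using ij E M' unfolding M'_def by auto
    qed
  qed (use A' E M' in auto)
  define U'' where "U'' = four_block_mat (1\<^sub>m 1) (0\<^sub>m 1 k) (0\<^sub>m k 1) U'"
  have U'': "U'' \<in> carrier_mat ?n ?n" unfolding U''_def using U' by auto
  have U'T: "transpose_mat U' \<in> carrier_mat k k" using U' by auto
  have U''T: "transpose_mat U'' = four_block_mat (1\<^sub>m 1) (0\<^sub>m 1 k) (0\<^sub>m k 1) (transpose_mat U')"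
    unfolding U''_def using U' by (subst transpose_four_block_mat) auto
  have UU'': "transpose_mat U'' * U'' = 1\<^sub>m ?n"
  proof -
    have "transpose_mat U'' * U'' = four_block_mat (1\<^sub>m 1) (0\<^sub>m 1 k) (0\<^sub>m k 1) (1\<^sub>m k)"
      unfolding U''T unfolding U''_def
      by (subst mult_four_block_mat[OF one_carrier_mat zero_carrier_mat zero_carrier_mat U'T
          one_carrier_mat zero_carrier_mat zero_carrier_mat U'], insert U' U'T UU', auto)
    also have "\<dots> = 1\<^sub>m (1 + k)" by (rule four_block_one_mat)
    finally show ?thesis by simp
  qed
  have D'': "transpose_mat U'' * A' * U'' = four_block_mat E (0\<^sub>m 1 k) (0\<^sub>m k 1) (diagm k d')"
  proof -
    have "transpose_mat U'' * A' = four_block_mat E (0\<^sub>m 1 k) (0\<^sub>m k 1) (transpose_mat U' * M')"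
      unfolding U''T A'blk
      by (subst mult_four_block_mat[OF one_carrier_mat zero_carrier_mat zero_carrier_mat U'T
          E zero_carrier_mat zero_carrier_mat M'], insert U' U'T E M', auto)
    also have "\<dots> * U'' = four_block_mat E (0\<^sub>m 1 k) (0\<^sub>m k 1) (transpose_mat U' * M' * U')"
      unfolding U''_def
      by (subst mult_four_block_mat[OF E zero_carrier_mat zero_carrier_mat mult_carrier_mat[OF U'T M']
          one_carrier_mat zero_carrier_mat zero_carrier_mat U'], insert U' U'T E M', auto)
    finally show ?thesis unfolding D' .
  qed
  define d where "d = (\<lambda>i. if i = 0 then e else d' (i - 1))"
  have blk: "four_block_mat E (0\<^sub>m 1 k) (0\<^sub>m k 1) (diagm k d') = diagm ?n d"
  proof (rule eq_matI)
    fix i j assume "i < dim_row (diagm ?n d)" "j < dim_col (diagm ?n d)"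
    hence ij: "i < ?n" "j < ?n" by auto
    show "four_block_mat E (0\<^sub>m 1 k) (0\<^sub>m k 1) (diagm k d') $$ (i, j) = diagm ?n d $$ (i, j)"
    proof (cases "i = 0 \<or> j = 0")
      case True
      thus ?thesis using ij E unfolding E_def diagm_def d_def by auto
    next
      case False
      then obtain i' j' where "i = Suc i'" "j = Suc j'" by (metis not0_implies_Suc)
      thus ?thesis using ij E unfolding diagm_def d_def by auto
    qed
  qed (use E in auto)
  define U where "U = H * U''"
  have U: "U \<in> carrier_mat ?n ?n" unfolding U_def using H U'' by auto
  have UT: "transpose_mat U = transpose_mat U'' * transpose_mat H"
    unfolding U_def using H U'' by (rule transpose_mult)
  have U''T': "transpose_mat U'' \<in> carrier_mat ?n ?n" using U'' by auto
  have "transpose_mat U * U = transpose_mat U'' * (transpose_mat H * H) * U''"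
    unfolding UT unfolding U_def A'_def using H HT U'' U''T' by (simp add: assoc_mult_mat[of _ ?n ?n _ ?n _ ?n])
  also have "\<dots> = 1\<^sub>m ?n" unfolding HH using U'' UU'' by simp
  finally have UU: "transpose_mat U * U = 1\<^sub>m ?n" .
  have "transpose_mat U * M * U = transpose_mat U'' * A' * U''"
    unfolding UT unfolding U_def A'_def using H HT U'' U''T' M by (simp add: assoc_mult_mat[of _ ?n ?n _ ?n _ ?n])
  also have "\<dots> = diagm ?n d" unfolding D'' blk ..
  finally show ?case using U UU by blast
qed



definition pairm :: "real mat \<Rightarrow> real mat \<Rightarrow> real" where
  "pairm W A = (\<Sum>i\<in>{0..<dim_row A}. \<Sum>j\<in>{0..<dim_col A}. W $$ (i,j) * A $$ (i,j))"

definition contr :: "real mat \<Rightarrow> bool" where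
  "contr W \<longleftrightarrow> (\<forall>x \<in> carrier_vec (dim_col W). (W *\<^sub>v x) \<bullet> (W *\<^sub>v x) \<le> x \<bullet> x)"

lemma pairm_mult:
  assumes W: "W \<in> carrier_mat m n" and A: "A \<in> carrier_mat m k" and Y: "Y \<in> carrier_mat k n"
  shows "pairm W (A * Y) = pairm (W * transpose_mat Y) A"
proof -
  have "pairm W (A * Y) = (\<Sum>i\<in>{0..<m}. \<Sum>j\<in>{0..<n}. \<Sum>l\<in>{0..<k}. W $$ (i,j) * (A $$ (i,l) * Y $$ (l,j)))"
    unfolding pairm_def using W A Y by (simp add: scalar_prod_def sum_distrib_left)
  also have "\<dots> = (\<Sum>i\<in>{0..<m}. \<Sum>l\<in>{0..<k}. \<Sum>j\<in>{0..<n}. W $$ (i,j) * (A $$ (i,l) * Y $$ (l,j)))"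
    by (rule sum.cong, simp, rule sum.swap)
  also have "\<dots> = pairm (W * transpose_mat Y) A"
    unfolding pairm_def using W A Y
    by (auto simp: scalar_prod_def sum_distrib_right sum_distrib_left intro!: sum.cong simp: ac_simps)
  finally show ?thesis .
qed

lemma pairm_col:
  assumes X: "X \<in> carrier_mat m n" and Z: "Z \<in> carrier_mat m n"
  shows "pairm X Z = (\<Sum>j\<in>{0..<n}. col X j \<bullet> col Z j)"
proof -
  have "pairm X Z = (\<Sum>i\<in>{0..<m}. \<Sum>j\<in>{0..<n}. X $$ (i,j) * Z $$ (i,j))"
    unfolding pairm_def using Z by simp
  also have "\<dots> = (\<Sum>j\<in>{0..<n}. \<Sum>i\<in>{0..<m}. X $$ (i,j) * Z $$ (i,j))" by (rule sum.swap)
  also have "\<dots> = (\<Sum>j\<in>{0..<n}. col X j \<bullet> col Z j)"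
    using X Z by (auto simp: scalar_prod_def intro!: sum.cong)
  finally show ?thesis .
qed

lemma pairm_add:
  assumes "A \<in> carrier_mat m n" "B \<in> carrier_mat m n"
  shows "pairm W (A + B) = pairm W A + pairm W B"
  unfolding pairm_def using assms by (simp add: sum.distrib distrib_left)

lemma pairm_smult:
  shows "pairm W (c \<cdot>\<^sub>m A) = c * pairm W A"
  unfolding pairm_def by (simp add: sum_distrib_left ac_simps)

lemma mult_diagm:
  assumes X: "X \<in> carrier_mat m n"
  shows "X * diagm n c = mat m n (\<lambda>(i,j). X $$ (i,j) * c j)"
proof (rule eq_matI)
  fix i j assume "i < dim_row (mat m n (\<lambda>(i,j). X $$ (i,j) * c j))" "j < dim_col (mat m n (\<lambda>(i,j). X $$ (i,j) * c j))"
  hence ij: "i < m" "j < n" by auto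
  have "(X * diagm n c) $$ (i,j) = (\<Sum>l\<in>{0..<n}. X $$ (i,l) * (if l = j then c j else 0))"
    using X ij by (auto simp: scalar_prod_def intro!: sum.cong)
  also have "\<dots> = X $$ (i,j) * c j" using ij by (simp add: if_distrib sum.delta cong: if_cong)
  finally show "(X * diagm n c) $$ (i,j) = mat m n (\<lambda>(i,j). X $$ (i,j) * c j) $$ (i,j)" using ij by simp
qed (use X in auto)

lemma diagm_mult_vec:
  assumes y: "y \<in> carrier_vec n"
  shows "diagm n c *\<^sub>v y = vec n (\<lambda>j. c j * y $ j)"
proof (rule eq_vecI)
  fix i assume "i < dim_vec (vec n (\<lambda>j. c j * y $ j))"
  hence i: "i < n" by auto
  have "(diagm n c *\<^sub>v y) $ i = (\<Sum>l\<in>{0..<n}. (if i = l then c i else 0) * y $ l)"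
    using y i by (auto simp: scalar_prod_def intro!: sum.cong)
  also have "\<dots> = (\<Sum>l\<in>{0..<n}. if i = l then c i * y $ l else 0)" by (rule sum.cong) auto
  also have "\<dots> = c i * y $ i" using i by (simp add: sum.delta)
  finally show "(diagm n c *\<^sub>v y) $ i = vec n (\<lambda>j. c j * y $ j) $ i" using i by simp
qed (use y in auto)

lemma sum_sq_expand:
  fixes t :: real
  shows "(\<Sum>i\<in>S. (t * a i - b i)^2) = t^2 * (\<Sum>i\<in>S. (a i)^2) - 2 * t * (\<Sum>i\<in>S. a i * b i) + (\<Sum>i\<in>S. (b i)^2)"
  by (simp add: power2_eq_square algebra_simps sum.distrib sum_subtractf sum_distrib_left)

lemma vec_le_sqrt:
  fixes x y :: "real vec"
  assumes x: "x \<in> carrier_vec m" and y: "y \<in> carrier_vec m" and xx: "x \<bullet> x \<le> 1"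
  shows "x \<bullet> y \<le> sqrt (y \<bullet> y)"
proof -
  let ?t = "sqrt (y \<bullet> y)"
  have yy: "y \<bullet> y = (\<Sum>i\<in>{0..<m}. (y $ i)^2)" using y by (simp add: scalar_prod_def power2_eq_square)
  have xx': "(\<Sum>i\<in>{0..<m}. (x $ i)^2) \<le> 1" using xx x by (simp add: scalar_prod_def power2_eq_square)
  have xy: "x \<bullet> y = (\<Sum>i\<in>{0..<m}. x $ i * y $ i)" using y by (simp add: scalar_prod_def)
  have y0: "y \<bullet> y \<ge> 0" unfolding yy by (intro sum_nonneg) auto
  show ?thesis
  proof (cases "y \<bullet> y = 0")
    case True
    hence "\<forall>i\<in>{0..<m}. (y $ i)^2 = 0" unfolding yy by (subst (asm) sum_nonneg_eq_0_iff) auto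
    hence "x \<bullet> y = 0" unfolding xy by auto
    thus ?thesis using True by simp
  next
    case False
    hence t: "?t > 0" using y0 by simp
    have "0 \<le> (\<Sum>i\<in>{0..<m}. (?t * x $ i - y $ i)^2)" by (intro sum_nonneg) auto
    also have "\<dots> = ?t^2 * (\<Sum>i\<in>{0..<m}. (x $ i)^2) - 2 * ?t * (x \<bullet> y) + (y \<bullet> y)"
      unfolding xy yy by (rule sum_sq_expand)
    also have "\<dots> \<le> ?t^2 - 2 * ?t * (x \<bullet> y) + (y \<bullet> y)"
      using xx' by (simp add: mult_left_le)
    also have "\<dots> = 2 * ?t * (?t - x \<bullet> y)" using y0 by (simp add: algebra_simps power2_eq_square)
    finally have "0 \<le> ?t - x \<bullet> y" using t by (simp add: zero_le_mult_iff)
    thus ?thesis by simp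
  qed
qed



lemma spec_AtA:
  fixes A :: "real mat"
  assumes A: "A \<in> carrier_mat m n"
  shows "\<exists>U d. U \<in> carrier_mat n n \<and> transpose_mat U * U = 1\<^sub>m n \<and>
     transpose_mat (A * U) * (A * U) = diagm n d"
proof -
  have M: "transpose_mat A * A \<in> carrier_mat n n" using A by auto
  have "transpose_mat (transpose_mat A * A) = transpose_mat A * A"
    using A by (subst transpose_mult[of _ n m _ n]) auto
  from spectral[OF M this] obtain U d where U: "U \<in> carrier_mat n n" and UU: "transpose_mat U * U = 1\<^sub>m n"
    and D: "transpose_mat U * (transpose_mat A * A) * U = diagm n d" by auto
  have "transpose_mat (A * U) * (A * U) = transpose_mat U * (transpose_mat A * A) * U"
    using A U by (simp add: transpose_mult[of _ m n _ n] assoc_mult_mat[of _ n m _ n _ n] assoc_mult_mat[of _ n n _ m _ n] assoc_mult_mat[of _ n n _ n _ n])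
  thus ?thesis using U UU D by auto
qed

lemma UUT:
  fixes U :: "real mat"
  assumes U: "U \<in> carrier_mat n n" and UU: "transpose_mat U * U = 1\<^sub>m n"
  shows "U * transpose_mat U = 1\<^sub>m n"
  using mat_mult_left_right_inverse[of "transpose_mat U" n U] U UU by auto

lemma pairm_rot:
  assumes U: "U \<in> carrier_mat n n" and UU: "transpose_mat U * U = 1\<^sub>m n"
    and W: "W \<in> carrier_mat m n" and A: "A \<in> carrier_mat m n"
  shows "pairm W A = pairm (W * U) (A * U)"
proof -
  have "A = (A * U) * transpose_mat U"
    using A U UUT[OF U UU] by (simp add: assoc_mult_mat[of _ m n _ n _ n])
  hence "pairm W A = pairm W ((A * U) * transpose_mat U)" by simp
  also have "\<dots> = pairm (W * transpose_mat (transpose_mat U)) (A * U)"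
    by (rule pairm_mult[OF W], insert A U, auto)
  finally show ?thesis by simp
qed

lemma col_AU:
  assumes A: "A \<in> carrier_mat m n" and U: "U \<in> carrier_mat n n"
    and D: "transpose_mat (A * U) * (A * U) = diagm n d" and i: "i < n" and j: "j < n"
  shows "col (A * U) i \<bullet> col (A * U) j = (if i = j then d i else 0)"
proof -
  have "(transpose_mat (A * U) * (A * U)) $$ (i,j) = col (A * U) i \<bullet> col (A * U) j"
    using A U i j by simp
  thus ?thesis unfolding D using i j by simp
qed

lemma col_U:
  assumes U: "U \<in> carrier_mat n n" and UU: "transpose_mat U * U = 1\<^sub>m n" and i: "i < n" and j: "j < n"
  shows "col U i \<bullet> col U j = (if i = j then 1 else 0)"
proof -
  have "(transpose_mat U * U) $$ (i,j) = col U i \<bullet> col U j" using U i j by simp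
  thus ?thesis unfolding UU using i j by simp
qed

lemma d_nonneg:
  assumes A: "A \<in> carrier_mat m n" and U: "U \<in> carrier_mat n n"
    and D: "transpose_mat (A * U) * (A * U) = diagm n d" and i: "i < n"
  shows "d i \<ge> 0"
proof -
  have "d i = col (A * U) i \<bullet> col (A * U) i" using col_AU[OF A U D i i] by simp
  also have "\<dots> = (\<Sum>l\<in>{0..<m}. (col (A * U) i $ l)^2)"
    using A U by (simp add: scalar_prod_def power2_eq_square)
  also have "\<dots> \<ge> 0" by (intro sum_nonneg) auto
  finally show ?thesis .
qed

lemma nuclear_AU:
  assumes A: "A \<in> carrier_mat m n" and U: "U \<in> carrier_mat n n" and UU: "transpose_mat U * U = 1\<^sub>m n"
    and D: "transpose_mat (A * U) * (A * U) = diagm n d"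
  shows "nuclear_norm A = (\<Sum>i\<in>{0..<n}. sqrt (d i))"
proof (rule nuclear_norm_diag[OF A U UU])
  show "transpose_mat U * (transpose_mat A * A) * U = diagm n d"
    unfolding D[symmetric] using A U
    by (simp add: transpose_mult[of _ m n _ n] assoc_mult_mat[of _ n m _ n _ n] assoc_mult_mat[of _ n n _ m _ n] assoc_mult_mat[of _ n n _ n _ n])
qed

lemma dual_le:
  assumes A: "A \<in> carrier_mat m n" and W: "W \<in> carrier_mat m n" and c: "contr W"
  shows "pairm W A \<le> nuclear_norm A"
proof -
  obtain U d where U: "U \<in> carrier_mat n n" and UU: "transpose_mat U * U = 1\<^sub>m n"
    and D: "transpose_mat (A * U) * (A * U) = diagm n d" using spec_AtA[OF A] by auto
  have "pairm W A = pairm (W * U) (A * U)" by (rule pairm_rot[OF U UU W A])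
  also have "\<dots> = (\<Sum>j\<in>{0..<n}. col (W * U) j \<bullet> col (A * U) j)"
    by (rule pairm_col, insert W A U, auto)
  also have "\<dots> \<le> (\<Sum>j\<in>{0..<n}. sqrt (d j))"
  proof (rule sum_mono)
    fix j assume "j \<in> {0..<n}"
    hence j: "j < n" by auto
    have cw: "col (W * U) j = W *\<^sub>v col U j" using j by (rule col_mult2[OF W U])
    have "(W *\<^sub>v col U j) \<bullet> (W *\<^sub>v col U j) \<le> col U j \<bullet> col U j"
      using c W U j unfolding contr_def by auto
    also have "\<dots> = 1" using col_U[OF U UU j j] by simp
    finally have "col (W * U) j \<bullet> col (A * U) j \<le> sqrt (col (A * U) j \<bullet> col (A * U) j)"
      unfolding cw by (intro vec_le_sqrt[of _ m], insert W U A j, auto)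
    thus "col (W * U) j \<bullet> col (A * U) j \<le> sqrt (d j)" using col_AU[OF A U D j j] by simp
  qed
  also have "\<dots> = nuclear_norm A" using nuclear_AU[OF A U UU D] by simp
  finally show ?thesis .
qed



lemma quad_form:
  fixes B :: "real mat"
  assumes B: "B \<in> carrier_mat m n" and D: "transpose_mat B * B = diagm n d" and z: "z \<in> carrier_vec n"
  shows "(B *\<^sub>v z) \<bullet> (B *\<^sub>v z) = (\<Sum>j\<in>{0..<n}. d j * (z $ j)^2)"
proof -
  have "(B *\<^sub>v z) \<bullet> (B *\<^sub>v z) = (transpose_mat B *\<^sub>v (B *\<^sub>v z)) \<bullet> z"
    using transpose_vec_mult_scalar[OF B z, of "B *\<^sub>v z"] B z by simp
  also have "transpose_mat B *\<^sub>v (B *\<^sub>v z) = diagm n d *\<^sub>v z"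
    unfolding D[symmetric] using B z by (simp add: assoc_mult_mat_vec[of _ n m _ n])
  also have "\<dots> = vec n (\<lambda>j. d j * z $ j)" by (rule diagm_mult_vec[OF z])
  also have "vec n (\<lambda>j. d j * z $ j) \<bullet> z = (\<Sum>j\<in>{0..<n}. d j * (z $ j)^2)"
    using z by (simp add: scalar_prod_def power2_eq_square mult.assoc)
  finally show ?thesis .
qed

lemma dual_attain:
  assumes A: "A \<in> carrier_mat m n"
  shows "\<exists>W \<in> carrier_mat m n. contr W \<and> pairm W A = nuclear_norm A"
proof -
  obtain U d where U: "U \<in> carrier_mat n n" and UU: "transpose_mat U * U = 1\<^sub>m n"
    and D: "transpose_mat (A * U) * (A * U) = diagm n d" using spec_AtA[OF A] by auto
  have UT: "transpose_mat U \<in> carrier_mat n n" using U by auto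
  define c where "c = (\<lambda>j. if d j > 0 then 1 / sqrt (d j) else 0)"
  define B where "B = A * U"
  have B: "B \<in> carrier_mat m n" unfolding B_def using A U by auto
  define W where "W = B * diagm n c * transpose_mat U"
  have W: "W \<in> carrier_mat m n" unfolding W_def using B UT by auto
  have WU: "W * U = B * diagm n c"
  proof -
    have BC: "B * diagm n c \<in> carrier_mat m n" using B by auto
    have "W * U = (B * diagm n c) * (transpose_mat U * U)"
      unfolding W_def by (rule assoc_mult_mat[OF BC UT U])
    thus ?thesis unfolding UU using BC by simp
  qed
  have colB: "col (B * diagm n c) j = c j \<cdot>\<^sub>v col B j" if j: "j < n" for j
    unfolding mult_diagm[OF B] using j B by (intro eq_vecI) auto
  have "pairm W A = pairm (W * U) (A * U)" by (rule pairm_rot[OF U UU W A])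
  also have "\<dots> = (\<Sum>j\<in>{0..<n}. col (B * diagm n c) j \<bullet> col B j)"
    unfolding WU B_def[symmetric] by (rule pairm_col, insert B, auto)
  also have "\<dots> = (\<Sum>j\<in>{0..<n}. sqrt (d j))"
  proof (rule sum.cong)
    fix j assume "j \<in> {0..<n}"
    hence j: "j < n" by auto
    have "col (B * diagm n c) j \<bullet> col B j = c j * (col B j \<bullet> col B j)"
      unfolding colB[OF j] using B j by (simp add: smult_scalar_prod_distrib[of _ m])
    also have "\<dots> = c j * d j" using col_AU[OF A U D j j] unfolding B_def by simp
    also have "\<dots> = sqrt (d j)"
      using d_nonneg[OF A U D j] unfolding c_def
      by (auto simp: field_simps)
    finally show "col (B * diagm n c) j \<bullet> col B j = sqrt (d j)" .
  qed simp
  also have "\<dots> = nuclear_norm A" using nuclear_AU[OF A U UU D] by simp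
  finally have pW: "pairm W A = nuclear_norm A" .
  have cW: "contr W" unfolding contr_def
  proof
    fix x :: "real vec" assume "x \<in> carrier_vec (dim_col W)"
    hence x: "x \<in> carrier_vec n" using W by auto
    define y where "y = transpose_mat U *\<^sub>v x"
    have y: "y \<in> carrier_vec n" unfolding y_def using UT x by auto
    define z where "z = diagm n c *\<^sub>v y"
    have z: "z \<in> carrier_vec n" unfolding z_def by (rule mult_mat_vec_carrier[OF diagm_carrier y])
    have zz: "z = vec n (\<lambda>j. c j * y $ j)" unfolding z_def by (rule diagm_mult_vec[OF y])
    have BC: "B * diagm n c \<in> carrier_mat m n" using B by auto
    have Wx: "W *\<^sub>v x = B *\<^sub>v z"
    proof -
      have "W *\<^sub>v x = (B * diagm n c) *\<^sub>v y"
        unfolding W_def y_def by (rule assoc_mult_mat_vec[OF BC UT x])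
      also have "\<dots> = B *\<^sub>v z" unfolding z_def by (rule assoc_mult_mat_vec[OF B diagm_carrier y])
      finally show ?thesis .
    qed
    have "(W *\<^sub>v x) \<bullet> (W *\<^sub>v x) = (\<Sum>j\<in>{0..<n}. d j * (z $ j)^2)"
      unfolding Wx by (rule quad_form[OF B _ z], unfold B_def, rule D)
    also have "\<dots> \<le> (\<Sum>j\<in>{0..<n}. (y $ j)^2)"
    proof (rule sum_mono)
      fix j assume "j \<in> {0..<n}"
      hence j: "j < n" by auto
      have dj: "d j \<ge> 0" by (rule d_nonneg[OF A U D j])
      have "d j * (z $ j)^2 = (d j * (c j)^2) * (y $ j)^2" unfolding zz using j
        by (simp add: power2_eq_square)
      also have "d j * (c j)^2 = (if d j > 0 then 1 else 0)"
      proof (cases "d j > 0")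
        case True
        have "(c j)^2 = 1 / d j" unfolding c_def using True by (simp add: power_divide)
        thus ?thesis using True by simp
      next
        case False
        thus ?thesis unfolding c_def by simp
      qed
      finally show "d j * (z $ j)^2 \<le> (y $ j)^2" by auto
    qed
    also have "\<dots> = y \<bullet> y" using y by (simp add: scalar_prod_def power2_eq_square)
    also have "y \<bullet> y = (U *\<^sub>v y) \<bullet> x"
      using transpose_vec_mult_scalar[OF UT x, of y] y unfolding y_def by simp
    also have "U *\<^sub>v y = x" unfolding y_def using U UT x UUT[OF U UU]
      by (simp add: assoc_mult_mat_vec[of _ n n _ n, symmetric])
    finally show "(W *\<^sub>v x) \<bullet> (W *\<^sub>v x) \<le> x \<bullet> x" .
  qed
  show ?thesis using W cW pW by blast
qed



lemma N_tri:
  assumes A: "A \<in> carrier_mat m n" and B: "B \<in> carrier_mat m n"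
  shows "nuclear_norm (A + B) \<le> nuclear_norm A + nuclear_norm B"
proof -
  have AB: "A + B \<in> carrier_mat m n" using A B by auto
  obtain W where W: "W \<in> carrier_mat m n" "contr W" "pairm W (A + B) = nuclear_norm (A + B)"
    using dual_attain[OF AB] by auto
  have "nuclear_norm (A + B) = pairm W A + pairm W B" using W(3) pairm_add[OF A B] by simp
  also have "\<dots> \<le> nuclear_norm A + nuclear_norm B"
    using dual_le[OF A W(1,2)] dual_le[OF B W(1,2)] by simp
  finally show ?thesis .
qed

lemma N_smult:
  assumes A: "A \<in> carrier_mat m n" and c: "c \<ge> 0"
  shows "nuclear_norm (c \<cdot>\<^sub>m A) \<le> c * nuclear_norm A"
proof -
  have cA: "c \<cdot>\<^sub>m A \<in> carrier_mat m n" using A by auto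
  obtain W where W: "W \<in> carrier_mat m n" "contr W" "pairm W (c \<cdot>\<^sub>m A) = nuclear_norm (c \<cdot>\<^sub>m A)"
    using dual_attain[OF cA] by auto
  have "nuclear_norm (c \<cdot>\<^sub>m A) = c * pairm W A" using W(3) pairm_smult by simp
  also have "\<dots> \<le> c * nuclear_norm A"
    using dual_le[OF A W(1,2)] c by (simp add: mult_left_mono)
  finally show ?thesis .
qed

lemma N_mult:
  assumes A: "A \<in> carrier_mat m k" and Y: "Y \<in> carrier_mat k n"
    and YC: "\<forall>x \<in> carrier_vec k. (transpose_mat Y *\<^sub>v x) \<bullet> (transpose_mat Y *\<^sub>v x) \<le> x \<bullet> x"
  shows "nuclear_norm (A * Y) \<le> nuclear_norm A"
proof -
  have AY: "A * Y \<in> carrier_mat m n" using A Y by auto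
  obtain W where W: "W \<in> carrier_mat m n" "contr W" "pairm W (A * Y) = nuclear_norm (A * Y)"
    using dual_attain[OF AY] by auto
  have YT: "transpose_mat Y \<in> carrier_mat n k" using Y by auto
  have WY: "W * transpose_mat Y \<in> carrier_mat m k" using W YT by auto
  have cWY: "contr (W * transpose_mat Y)" unfolding contr_def
  proof
    fix x :: "real vec" assume "x \<in> carrier_vec (dim_col (W * transpose_mat Y))"
    hence x: "x \<in> carrier_vec k" using WY by auto
    have y: "transpose_mat Y *\<^sub>v x \<in> carrier_vec n" using YT x by auto
    have "(W * transpose_mat Y) *\<^sub>v x = W *\<^sub>v (transpose_mat Y *\<^sub>v x)"
      using W YT x by (simp add: assoc_mult_mat_vec[of _ m n _ k])
    moreover have "(W *\<^sub>v (transpose_mat Y *\<^sub>v x)) \<bullet> (W *\<^sub>v (transpose_mat Y *\<^sub>v x))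
        \<le> (transpose_mat Y *\<^sub>v x) \<bullet> (transpose_mat Y *\<^sub>v x)"
      using W y unfolding contr_def by auto
    ultimately show "((W * transpose_mat Y) *\<^sub>v x) \<bullet> ((W * transpose_mat Y) *\<^sub>v x) \<le> x \<bullet> x"
      using YC x by force
  qed
  have "nuclear_norm (A * Y) = pairm (W * transpose_mat Y) A"
    using W(3) pairm_mult[OF W(1) A Y] by simp
  also have "\<dots> \<le> nuclear_norm A" by (rule dual_le[OF A WY cWY])
  finally show ?thesis .
qed



lemma YT_contr:
  fixes Y :: "real mat"
  assumes Y: "Y \<in> carrier_mat q n" and YY: "transpose_mat Y * Y = 1\<^sub>m n"
  shows "\<forall>x \<in> carrier_vec q. (transpose_mat Y *\<^sub>v x) \<bullet> (transpose_mat Y *\<^sub>v x) \<le> x \<bullet> x"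
proof
  fix x :: "real vec" assume x: "x \<in> carrier_vec q"
  have YT: "transpose_mat Y \<in> carrier_mat n q" using Y by auto
  define z where "z = transpose_mat Y *\<^sub>v x"
  have z: "z \<in> carrier_vec n" unfolding z_def using YT x by auto
  define p where "p = Y *\<^sub>v z"
  have p: "p \<in> carrier_vec q" unfolding p_def using Y z by auto
  have xp: "x \<bullet> p = z \<bullet> z"
    unfolding p_def z_def using transpose_vec_mult_scalar[OF Y z x] z_def by simp
  have "p \<bullet> p = (transpose_mat Y *\<^sub>v p) \<bullet> z"
    using transpose_vec_mult_scalar[OF Y z p] unfolding p_def by simp
  also have "transpose_mat Y *\<^sub>v p = z"
    unfolding p_def using YT Y z YY by (simp add: assoc_mult_mat_vec[of _ n q _ n, symmetric])
  finally have pp: "p \<bullet> p = z \<bullet> z" .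
  have "0 \<le> (\<Sum>i\<in>{0..<q}. (1 * x $ i - p $ i)^2)" by (intro sum_nonneg) auto
  also have "\<dots> = x \<bullet> x - 2 * (x \<bullet> p) + p \<bullet> p"
    unfolding sum_sq_expand using x p by (simp add: scalar_prod_def power2_eq_square)
  finally show "(transpose_mat Y *\<^sub>v x) \<bullet> (transpose_mat Y *\<^sub>v x) \<le> x \<bullet> x"
    unfolding z_def[symmetric] xp pp by simp
qed

lemma Y_contr:
  fixes Y :: "real mat"
  assumes Y: "Y \<in> carrier_mat q n" and YY: "transpose_mat Y * Y = 1\<^sub>m n"
  shows "\<forall>x \<in> carrier_vec n. (transpose_mat (transpose_mat Y) *\<^sub>v x) \<bullet> (transpose_mat (transpose_mat Y) *\<^sub>v x) \<le> x \<bullet> x"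
proof
  fix x :: "real vec" assume x: "x \<in> carrier_vec n"
  have YT: "transpose_mat Y \<in> carrier_mat n q" using Y by auto
  have yx: "Y *\<^sub>v x \<in> carrier_vec q" using Y x by auto
  have "(Y *\<^sub>v x) \<bullet> (Y *\<^sub>v x) = (transpose_mat Y *\<^sub>v (Y *\<^sub>v x)) \<bullet> x"
    using transpose_vec_mult_scalar[OF Y x yx] by simp
  also have "transpose_mat Y *\<^sub>v (Y *\<^sub>v x) = x"
    using YT Y x YY by (simp add: assoc_mult_mat_vec[of _ n q _ n, symmetric])
  finally show "(transpose_mat (transpose_mat Y) *\<^sub>v x) \<bullet> (transpose_mat (transpose_mat Y) *\<^sub>v x) \<le> x \<bullet> x"
    by simp
qed

definition fsq :: "real mat \<Rightarrow> real" where
  "fsq A = (\<Sum>i<dim_row A. \<Sum>j<dim_col A. (A $$ (i,j))^2)"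

lemma frob_sq: "(frob_norm A)^2 = fsq A"
  unfolding frob_norm_def fsq_def by (simp add: sum_nonneg)

lemma fsq_zero:
  assumes "A \<in> carrier_mat m n" "B \<in> carrier_mat m n" and "fsq (A - B) \<le> 0"
  shows "A = B"
proof (rule eq_matI)
  fix i j assume ij: "i < dim_row B" "j < dim_col B"
  have "fsq (A - B) = (\<Sum>i<m. \<Sum>j<n. (A $$ (i,j) - B $$ (i,j))^2)"
    unfolding fsq_def using assms by (auto intro!: sum.cong)
  hence "(\<Sum>i<m. \<Sum>j<n. (A $$ (i,j) - B $$ (i,j))^2) = 0"
    using assms(3) by (metis (no_types, lifting) antisym sum_nonneg zero_le_power2)
  hence "\<forall>i\<in>{..<m}. (\<Sum>j<n. (A $$ (i,j) - B $$ (i,j))^2) = 0"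
    by (subst (asm) sum_nonneg_eq_0_iff) (auto intro: sum_nonneg)
  hence "\<forall>i\<in>{..<m}. \<forall>j\<in>{..<n}. (A $$ (i,j) - B $$ (i,j))^2 = 0"
    by (subst (asm) sum_nonneg_eq_0_iff) auto
  thus "A $$ (i,j) = B $$ (i,j)" using ij assms by auto
qed (use assms in auto)

lemma fsq_parallelogram:
  assumes X: "X \<in> carrier_mat m n" and A: "A \<in> carrier_mat m n" and B: "B \<in> carrier_mat m n"
  shows "fsq (X - (1/2) \<cdot>\<^sub>m (A + B)) = (1/2) * fsq (X - A) + (1/2) * fsq (X - B) - (1/4) * fsq (A - B)"
proof -
  have e: "\<And>x a b :: real. (x - (1/2) * (a + b))^2 = (1/2) * (x - a)^2 + (1/2) * (x - b)^2 - (1/4) * (a - b)^2"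
    by (simp add: power2_eq_square algebra_simps)
  have "fsq (X - (1/2) \<cdot>\<^sub>m (A + B)) = (\<Sum>i<m. \<Sum>j<n. (1/2) * (X $$ (i,j) - A $$ (i,j))^2
      + (1/2) * (X $$ (i,j) - B $$ (i,j))^2 - (1/4) * (A $$ (i,j) - B $$ (i,j))^2)"
    unfolding fsq_def using X A B by (intro sum.cong refl, auto simp: power2_eq_square field_simps)
  also have "\<dots> = (1/2) * fsq (X - A) + (1/2) * fsq (X - B) - (1/4) * fsq (A - B)"
    unfolding fsq_def using X A B by (simp add: sum.distrib sum_subtractf sum_distrib_left)
  finally show ?thesis .
qed



theorem proposition5:
  fixes X Y B_hat S_hat :: "real mat" and m n q :: nat and lam :: real
  assumes X: "X \<in> carrier_mat m n"
    and Y: "Y \<in> carrier_mat q n"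
    and YY: "transpose_mat Y * Y = 1\<^sub>m n"
    and lam: "lam > 0"
    and B: "B_hat \<in> carrier_mat m q"
    and Bopt: "\<forall>B \<in> carrier_mat m q.
        (1/2) * (frob_norm (X - B_hat * Y))^2 + lam * nuclear_norm B_hat
        \<le> (1/2) * (frob_norm (X - B * Y))^2 + lam * nuclear_norm B"
    and S: "S_hat \<in> carrier_mat m n"
    and Sopt: "\<forall>S \<in> carrier_mat m n.
        (1/2) * (frob_norm (X - S_hat))^2 + lam * nuclear_norm S_hat
        \<le> (1/2) * (frob_norm (X - S))^2 + lam * nuclear_norm S"
  shows "S_hat = B_hat * Y"
proof -
  define g where "g = (\<lambda>S. (1/2) * fsq (X - S) + lam * nuclear_norm S)"
  define Sb where "Sb = B_hat * Y"
  have Sb: "Sb \<in> carrier_mat m n" unfolding Sb_def using B Y by auto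
  have YT: "transpose_mat Y \<in> carrier_mat n q" using Y by auto
  have fB: "(1/2) * fsq (X - B_hat * Y) + lam * nuclear_norm B_hat
      \<le> (1/2) * fsq (X - Bx * Y) + lam * nuclear_norm Bx" if "Bx \<in> carrier_mat m q" for Bx
    using Bopt that unfolding frob_sq by auto
  have gS: "g S_hat \<le> g Sx" if "Sx \<in> carrier_mat m n" for Sx
    using Sopt that unfolding frob_sq g_def by auto
  have g1: "g Sb \<le> (1/2) * fsq (X - B_hat * Y) + lam * nuclear_norm B_hat"
  proof -
    have "nuclear_norm (B_hat * Y) \<le> nuclear_norm B_hat"
      by (rule N_mult[OF B Y YT_contr[OF Y YY]])
    thus ?thesis unfolding g_def Sb_def using lam by simp
  qed
  have g2: "(1/2) * fsq (X - B_hat * Y) + lam * nuclear_norm B_hat \<le> g Sx"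
    if Sx: "Sx \<in> carrier_mat m n" for Sx
  proof -
    have SY: "Sx * transpose_mat Y \<in> carrier_mat m q" using Sx YT by auto
    have e: "Sx * transpose_mat Y * Y = Sx"
      using Sx YT Y YY by (simp add: assoc_mult_mat[of _ m n _ q _ n])
    have "nuclear_norm (Sx * transpose_mat Y) \<le> nuclear_norm Sx"
      by (rule N_mult[OF Sx YT Y_contr[OF Y YY]])
    hence "(1/2) * fsq (X - Sx * transpose_mat Y * Y) + lam * nuclear_norm (Sx * transpose_mat Y) \<le> g Sx"
      unfolding e g_def using lam by simp
    thus ?thesis using fB[OF SY] by linarith
  qed
  have gSb: "g Sb \<le> g Sx" if "Sx \<in> carrier_mat m n" for Sx
    using g1 g2[OF that] by linarith
  define Mid where "Mid = (1/2) \<cdot>\<^sub>m (Sb + S_hat)"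
  have Mid: "Mid \<in> carrier_mat m n" unfolding Mid_def using Sb S by auto
  have NM: "nuclear_norm Mid \<le> (1/2) * nuclear_norm Sb + (1/2) * nuclear_norm S_hat"
  proof -
    have "nuclear_norm Mid \<le> (1/2) * nuclear_norm (Sb + S_hat)"
      unfolding Mid_def by (rule N_smult, insert Sb S, auto)
    also have "\<dots> \<le> (1/2) * (nuclear_norm Sb + nuclear_norm S_hat)"
      using N_tri[OF Sb S] by simp
    finally show ?thesis by simp
  qed
  have lN: "lam * nuclear_norm Mid \<le> (1/2) * (lam * nuclear_norm Sb) + (1/2) * (lam * nuclear_norm S_hat)"
  proof -
    have "lam * nuclear_norm Mid \<le> lam * ((1/2) * nuclear_norm Sb + (1/2) * nuclear_norm S_hat)"
      using NM lam by (intro mult_left_mono) auto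
    thus ?thesis by (simp add: algebra_simps)
  qed
  have fM: "fsq (X - Mid) = (1/2) * fsq (X - Sb) + (1/2) * fsq (X - S_hat) - (1/4) * fsq (Sb - S_hat)"
    unfolding Mid_def by (rule fsq_parallelogram[OF X Sb S])
  have "g Mid \<le> (1/2) * g Sb + (1/2) * g S_hat - (1/8) * fsq (Sb - S_hat)"
  proof -
    have gM: "g Mid = (1/2) * fsq (X - Mid) + lam * nuclear_norm Mid" unfolding g_def by simp
    have gB: "g Sb = (1/2) * fsq (X - Sb) + lam * nuclear_norm Sb" unfolding g_def by simp
    have gH: "g S_hat = (1/2) * fsq (X - S_hat) + lam * nuclear_norm S_hat" unfolding g_def by simp
    show ?thesis unfolding gM gB gH fM using lN by (simp add: algebra_simps)
  qed
  moreover have "g Sb \<le> g Mid" by (rule gSb[OF Mid])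
  moreover have "g S_hat \<le> g Sb" by (rule gS[OF Sb])
  ultimately have "fsq (Sb - S_hat) \<le> 0" by linarith
  hence "Sb = S_hat" by (rule fsq_zero[OF Sb S])
  thus ?thesis unfolding Sb_def by simp
qed

end
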